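(* Let $\Theta=\Theta^1\times\cdots\times\Theta^k\subseteq\mathbb{R}^p$ be a Cartesian product of convex sets, let $f:\mathbb{R}^p\to\mathbb{R}$ be continuous, convex and bounded below with a minimizer $\theta^\star$ on $\Theta$, $f^\star\triangleq f(\theta^\star)$, and let $\delta\triangleq1/k$. Consider the randomized block coordinate scheme: given $\theta_0\in\Theta$, for $n\ge1$ choose a separable majorant function $g_n(\theta)=\sum_{i=1}^kg_n^i(\theta^i)$ in $\mathcal{S}_{L,\rho}(f,\theta_{n-1})$ with $\rho\ge L$, pick $\hat\imath_n\in\{1,\dots,k\}$ uniformly at random (independently), set $\theta_n^{\hat\imath_n}\in\operatorname{arg\,min}_{\theta^{\hat\imath_n}\in\Theta^{\hat\imath_n}}g_n^{\hat\imath_n}(\theta^{\hat\imath_n})$ and $\theta_n^i=\theta_{n-1}^i$ for $i\ne\hat\imath_n$. Then $(f(\theta_n))_{n\ge0}$ converges almost surely to $f^\star$ and $$\mathbb{E}[f(\theta_n)-f^\star]\le\frac{C_0}{(1-\delta)+\delta n}\quad\text{for all }n\ge1,$$ with $C_0\triangleq(1-\delta)(f(\theta_0)-f^\star)+\frac{(1-\delta)\rho+\delta L}{2}\|\theta_0-\theta^\star\|_2^2$. If moreover $f$ is $\mu$-strongly convex, then for all $n\ge1$, $$\frac{L}{2}\mathbb{E}[\|\theta^\star-\theta_n\|_2^2]\le C_0\Big((1-\delta)+\delta\frac{L}{\rho+\mu}\Big)^n,\qquad \mathbb{E}[f(\theta_n)-f^\star]\le\frac{C_0}{\delta}\Big(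(1-\delta)+\delta\frac{L}{\rho+\mu}\Big)^{n-1}.$$
   Context: First-order surrogates: $g:\mathbb{R}^p\to\mathbb{R}$ belongs to $\mathcal{S}_L(f,\kappa)$ if (a) $g(\theta')\ge f(\theta')$ for all $\theta'\in\operatorname{arg\,min}_{\theta\in\Theta}g(\theta)$, and (b) $h\triangleq g-f$ is differentiable with $L$-Lipschitz gradient, $h(\kappa)=0$, $\nabla h(\kappa)=0$; $\mathcal{S}_{L,\rho}(f,\kappa)$ is the subset of $\rho$-strongly convex elements. A majorant function satisfies $g\ge f$ everywhere. The minimizers are assumed to exist. *)

theory Defs
  imports "HOL-Analysis.Analysis" "HOL-Probability.Probability"
begin

definition strongly_convex_on :: "'a::real_normed_vector set \<Rightarrow> ('a \<Rightarrow> real) \<Rightarrow> real \<Rightarrow> bool" where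
  "strongly_convex_on A g rho \<longleftrightarrow>
     (\<forall>x\<in>A. \<forall>y\<in>A. \<forall>t\<in>{0..1}.
        g ((1 - t) *\<^sub>R x + t *\<^sub>R y) \<le> (1 - t) * g x + t * g y - rho / 2 * t * (1 - t) * (norm (x - y))\<^sup>2)"

definition lipschitz_gradient :: "real \<Rightarrow> ('a::real_inner \<Rightarrow> real) \<Rightarrow> ('a \<Rightarrow> 'a) \<Rightarrow> bool" where
  "lipschitz_gradient L h grad \<longleftrightarrow>
     (\<forall>x. (h has_derivative (\<lambda>v. grad x \<bullet> v)) (at x)) \<and>
     (\<forall>x y. norm (grad x - grad y) \<le> L * norm (x - y))"

definition first_order_surrogate ::
  "'a::real_inner set \<Rightarrow> real \<Rightarrow> ('a \<Rightarrow> real) \<Rightarrow> 'a \<Rightarrow> ('a \<Rightarrow> real) \<Rightarrow> bool" where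
  "first_order_surrogate Theta L f kappa g \<longleftrightarrow>
     (\<forall>t'. (t' \<in> Theta \<and> (\<forall>t\<in>Theta. g t' \<le> g t)) \<longrightarrow> f t' \<le> g t') \<and>
     (\<exists>grad. lipschitz_gradient L (\<lambda>x. g x - f x) grad \<and>
             g kappa - f kappa = 0 \<and> grad kappa = 0)"

definition first_order_surrogate_sc ::
  "'a::real_inner set \<Rightarrow> real \<Rightarrow> real \<Rightarrow> ('a \<Rightarrow> real) \<Rightarrow> 'a \<Rightarrow> ('a \<Rightarrow> real) \<Rightarrow> bool" where
  "first_order_surrogate_sc Theta L rho f kappa g \<longleftrightarrow>
     first_order_surrogate Theta L f kappa g \<and> strongly_convex_on UNIV g rho"

text \<open>Block projection: keep coordinates in B, zero the others (identifies R^{B} with a subspace of R^p).\<close>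
definition blockproj :: "'n set \<Rightarrow> real ^ 'n \<Rightarrow> real ^ 'n" where
  "blockproj B x = (\<chi> j. if j \<in> B then x $ j else 0)"

definition block_product :: "nat \<Rightarrow> (nat \<Rightarrow> 'n set) \<Rightarrow> (nat \<Rightarrow> (real ^ 'n) set) \<Rightarrow> (real ^ 'n) set" where
  "block_product k B Th = {x. \<forall>i<k. blockproj (B i) x \<in> Th i}"

definition separable_fun :: "nat \<Rightarrow> (nat \<Rightarrow> 'n set) \<Rightarrow> (nat \<Rightarrow> real ^ 'n \<Rightarrow> real) \<Rightarrow> real ^ 'n \<Rightarrow> real" where
  "separable_fun k B gi x = (\<Sum>i<k. gi i (blockproj (B i) x))"

text \<open>History of the first n random block indices (index sequence iota 0, iota 1, ... stands for i_1, i_2, ...).\<close>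
definition history :: "(nat \<Rightarrow> 'w \<Rightarrow> nat) \<Rightarrow> nat \<Rightarrow> 'w \<Rightarrow> nat list" where
  "history iota n w = map (\<lambda>j. iota j w) [0..<n]"

end

theory Submission
  imports Defs
begin


lemma seq_bound1:
  fixes E D :: "nat \<Rightarrow> real" and dl c r :: real
  assumes dl: "0 < dl" "dl \<le> 1" and cr: "c \<le> r" "0 \<le> r"
    and Dnn: "\<And>n. D n \<ge> 0"
    and mono: "\<And>n. E (Suc n) \<le> E n"
    and rec: "\<And>n. E (Suc n) + r/2 * D (Suc n) \<le> (1-dl) * E n + c/2 * D n"
    and n: "n \<ge> 1"
  shows "E n * ((1-dl) + dl * real n) \<le> (1-dl) * E 0 + c/2 * D 0"
proof -
  have T: "E m + dl * (\<Sum>j\<in>{1..<m}. E j) + r/2 * D m \<le> (1-dl) * E 0 + c/2 * D 0" if "m \<ge> 1" for m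
    using that
  proof (induction m rule: dec_induct)
    case base
    then show ?case using rec[of 0] by simp
  next
    case (step m)
    have s: "(\<Sum>j\<in>{1..<Suc m}. E j) = (\<Sum>j\<in>{1..<m}. E j) + E m"
      using step.hyps by simp
    have "c/2 * D m \<le> r/2 * D m" using cr Dnn[of m] by (simp add: mult_right_mono)
    then show ?case using rec[of m] step.IH s by (simp add: algebra_simps)
  qed
  have dec: "E n \<le> E j" if "j \<le> n" for j
    using that
  proof (induction n rule: dec_induct)
    case base then show ?case by simp
  next
    case (step m) then show ?case using mono[of m] by linarith
  qed
  have "(\<Sum>j\<in>{1..<n}. E n) \<le> (\<Sum>j\<in>{1..<n}. E j)"
    by (intro sum_mono dec) simp
  hence "real (n - 1) * E n \<le> (\<Sum>j\<in>{1..<n}. E j)" by simp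
  hence "dl * (real (n - 1) * E n) \<le> dl * (\<Sum>j\<in>{1..<n}. E j)"
    using dl by (simp add: mult_left_mono)
  moreover have "0 \<le> r/2 * D n" using cr Dnn[of n] by simp
  moreover have "real (n-1) = real n - 1" using n by simp
  ultimately show ?thesis using T[OF n] by (simp add: algebra_simps)
qed

lemma seq_bound2:
  fixes E D :: "nat \<Rightarrow> real" and dl c r L mu :: real
  assumes dl: "0 < dl" "dl \<le> 1" and rL: "L \<le> r" "0 \<le> L" and mu: "mu > 0"
    and c: "c = dl * L + (1 - dl) * r"
    and Dnn: "\<And>n. D n \<ge> 0" and Enn: "\<And>n. E n \<ge> 0"
    and rec: "\<And>n. E (Suc n) + r/2 * D (Suc n) \<le> (1-dl) * E n + c/2 * D n"
    and Dq: "\<And>n. D (Suc n) \<le> ((1-dl) + dl * (L/(r+mu))) * D n"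
    and ED: "\<And>n. mu / 2 * D n \<le> E n"
    and n: "n \<ge> 1"
  shows "L/2 * D n \<le> ((1-dl) * E 0 + c/2 * D 0) * ((1-dl) + dl * (L/(r+mu))) ^ n"
    and "E n \<le> ((1-dl) * E 0 + c/2 * D 0) / dl * ((1-dl) + dl * (L/(r+mu))) ^ (n - 1)"
proof -
  define q where "q = (1-dl) + dl * (L/(r+mu))"
  define C where "C = (1-dl) * E 0 + c/2 * D 0"
  have rmu: "r + mu > 0" using rL mu by linarith
  have q0: "q \<ge> 0" unfolding q_def using dl rL rmu by simp
  have Dn: "D m \<le> q ^ m * D 0" for m
  proof (induction m)
    case 0 then show ?case by simp
  next
    case (Suc m)
    have "D (Suc m) \<le> q * D m" using Dq[of m] unfolding q_def .
    also have "\<dots> \<le> q * (q ^ m * D 0)" using Suc q0 by (simp add: mult_left_mono)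
    finally show ?case by simp
  qed
  have cL: "c - L = (1 - dl) * (r - L)" unfolding c by (simp add: algebra_simps)
  have "0 \<le> (1 - dl) * (r - L)" using dl rL by simp
  hence t1: "0 \<le> (c - L)/2 * D 0" using cL Dnn[of 0] by simp
  have t2: "0 \<le> (1-dl) * E 0" using dl Enn[of 0] by simp
  have "C - L/2 * D 0 = (1-dl) * E 0 + (c - L)/2 * D 0" unfolding C_def by (simp add: field_simps)
  hence LC: "L/2 * D 0 \<le> C" using t1 t2 by linarith
  have "0 \<le> L/2 * D 0" using rL Dnn[of 0] by simp
  hence C0: "C \<ge> 0" using LC by linarith
  show "L/2 * D n \<le> C * q ^ n"
  proof -
    have "L/2 * D n \<le> L/2 * (q ^ n * D 0)" using Dn[of n] rL by (simp add: mult_left_mono)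
    also have "\<dots> = q^n * (L/2 * D 0)" by simp
    also have "\<dots> \<le> q^n * C" using LC q0 by (intro mult_left_mono) simp_all
    finally show ?thesis by (simp add: mult.commute)
  qed
  have Pstep: "E (Suc m) + r/2 * D (Suc m) \<le> q * (E m + r/2 * D m)" for m
  proof -
    have e1: "q - (1 - dl) = dl * L / (r + mu)" unfolding q_def by simp
    have e2: "q * r - c = - (dl * L / (r + mu) * mu)" unfolding q_def c using rmu
      by (simp add: field_simps)
    have "q * (E m + r/2 * D m) - ((1-dl) * E m + c/2 * D m)
        = (q - (1-dl)) * E m + (q * r - c)/2 * D m" by (simp add: field_simps)
    also have "\<dots> = dl * L / (r + mu) * (E m - mu/2 * D m)" unfolding e1 e2
      by (simp add: algebra_simps)
    also have "\<dots> \<ge> 0" using ED[of m] dl rL rmu by simp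
    finally show ?thesis using rec[of m] by linarith
  qed
  have P: "E m + r/2 * D m \<le> C * q ^ (m - 1)" if "m \<ge> 1" for m
    using that
  proof (induction m rule: dec_induct)
    case base then show ?case using rec[of 0] unfolding C_def by simp
  next
    case (step m)
    have "E (Suc m) + r/2 * D (Suc m) \<le> q * (E m + r/2 * D m)" by (rule Pstep)
    also have "\<dots> \<le> q * (C * q ^ (m - 1))" using step.IH q0 by (simp add: mult_left_mono)
    also have "\<dots> = C * q ^ (Suc m - 1)" using step.hyps
      by (cases m) (auto simp: algebra_simps)
    finally show ?case .
  qed
  have "0 \<le> r/2 * D n" using Dnn[of n] rL by simp
  hence "E n \<le> C * q ^ (n - 1)" using P[OF n] by linarith
  also have "\<dots> \<le> C / dl * q ^ (n - 1)"
  proof -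
    have "C \<le> C / dl" using C0 dl by (simp add: le_divide_eq mult_left_le)
    thus ?thesis using q0 by (intro mult_right_mono) simp_all
  qed
  finally show "E n \<le> C / dl * q ^ (n - 1)" .
qed



lemma descent:
  fixes hf :: "'a::real_inner \<Rightarrow> real"
  assumes lg: "lipschitz_gradient L hf grad" and h0: "hf kap = 0" and g0: "grad kap = 0"
  shows "hf y \<le> L/2 * (norm (y - kap))\<^sup>2"
proof -
  define v where "v = y - kap"
  have der: "\<And>z. (hf has_derivative (\<lambda>u. grad z \<bullet> u)) (at z)"
   and lip: "\<And>a b. norm (grad a - grad b) \<le> L * norm (a - b)"
    using lg unfolding lipschitz_gradient_def by auto
  define phi where "phi t = hf (kap + t *\<^sub>R v) - L/2 * t\<^sup>2 * (norm v)\<^sup>2" for t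
  have D: "DERIV phi t :> (grad (kap + t *\<^sub>R v) \<bullet> v - L * t * (norm v)\<^sup>2)" for t
  proof -
    have l: "((\<lambda>t. kap + t *\<^sub>R v) has_derivative (\<lambda>s. s *\<^sub>R v)) (at t)"
      by (auto intro!: derivative_eq_intros)
    have "((\<lambda>t. hf (kap + t *\<^sub>R v)) has_derivative (\<lambda>s. grad (kap + t *\<^sub>R v) \<bullet> (s *\<^sub>R v))) (at t)"
      using has_derivative_compose[OF l der] by (simp add: o_def)
    moreover have "(\<lambda>s. grad (kap + t *\<^sub>R v) \<bullet> (s *\<^sub>R v)) = (*) (grad (kap + t *\<^sub>R v) \<bullet> v)"
      by (auto simp: fun_eq_iff mult.commute)
    ultimately have "((\<lambda>t. hf (kap + t *\<^sub>R v)) has_real_derivative (grad (kap + t *\<^sub>R v) \<bullet> v)) (at t)"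
      unfolding has_field_derivative_def by simp
    moreover have "((\<lambda>t. L/2 * t\<^sup>2 * (norm v)\<^sup>2) has_real_derivative (L * t * (norm v)\<^sup>2)) (at t)"
      by (auto intro!: derivative_eq_intros)
    ultimately show ?thesis unfolding phi_def by (intro derivative_eq_intros) auto
  qed
  have nonpos: "grad (kap + t *\<^sub>R v) \<bullet> v - L * t * (norm v)\<^sup>2 \<le> 0" if "0 \<le> t" for t
  proof -
    have "grad (kap + t *\<^sub>R v) \<bullet> v \<le> norm (grad (kap + t *\<^sub>R v)) * norm v"
      by (rule norm_cauchy_schwarz)
    also have "norm (grad (kap + t *\<^sub>R v)) \<le> L * norm (t *\<^sub>R v)"
      using lip[of "kap + t *\<^sub>R v" kap] g0 by simp
    hence "norm (grad (kap + t *\<^sub>R v)) * norm v \<le> L * norm (t *\<^sub>R v) * norm v"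
      by (simp add: mult_right_mono)
    also have "L * norm (t *\<^sub>R v) * norm v = L * t * (norm v)\<^sup>2"
      using that by (simp add: power2_eq_square)
    finally show ?thesis by simp
  qed
  have "phi 1 \<le> phi 0"
  proof (rule DERIV_nonpos_imp_nonincreasing[of 0 1 phi])
    fix t :: real assume "0 \<le> t" "t \<le> 1"
    then show "\<exists>y. DERIV phi t :> y \<and> y \<le> 0" using D[of t] nonpos[of t] by blast
  qed simp
  thus ?thesis unfolding phi_def v_def using h0 by simp
qed

lemma sc_min:
  fixes g :: "'a::real_normed_vector \<Rightarrow> real"
  assumes sc: "strongly_convex_on UNIV g r" and S: "convex S" and yS: "y \<in> S" and xS: "x \<in> S"
    and ymin: "\<forall>z\<in>S. g y \<le> g z"
  shows "g y + r/2 * (norm (x - y))\<^sup>2 \<le> g x"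
proof -
  define N where "N = r/2 * (norm (x - y))\<^sup>2"
  have key: "(1 - t) * N \<le> g x - g y" if t: "0 < t" "t \<le> 1" for t
  proof -
    have "(1 - t) *\<^sub>R y + t *\<^sub>R x \<in> S"
      using S yS xS t unfolding convex_def by auto
    hence "g y \<le> g ((1 - t) *\<^sub>R y + t *\<^sub>R x)" using ymin by auto
    also have "\<dots> \<le> (1 - t) * g y + t * g x - r / 2 * t * (1 - t) * (norm (y - x))\<^sup>2"
      using sc t unfolding strongly_convex_on_def by auto
    finally have "t * ((1 - t) * N) \<le> t * (g x - g y)"
      unfolding N_def by (simp add: algebra_simps norm_minus_commute)
    thus ?thesis using t by simp
  qed
  have "N \<le> g x - g y + e" if e: "e > 0" for e
  proof -
    define t where "t = min 1 (e / (\<bar>N\<bar> + 1))"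
    have t0: "0 < t" "t \<le> 1" unfolding t_def using e by auto
    have "t * \<bar>N\<bar> \<le> e"
    proof -
      have "t * \<bar>N\<bar> \<le> e / (\<bar>N\<bar> + 1) * \<bar>N\<bar>" unfolding t_def
        by (intro mult_right_mono) auto
      also have "\<dots> \<le> e" using e by (simp add: divide_le_eq field_simps)
      finally show ?thesis .
    qed
    moreover have "N - t * N \<le> g x - g y" using key[OF t0] by (simp add: algebra_simps)
    moreover have "t * N \<le> t * \<bar>N\<bar>" using t0 by (simp add: mult_left_mono)
    ultimately show ?thesis by linarith
  qed
  hence "N \<le> g x - g y" by (rule field_le_epsilon)
  thus ?thesis unfolding N_def by simp
qed



lemma bp_diff: "blockproj S (a - b) = blockproj S a - blockproj S b"
  by (simp add: blockproj_def vec_eq_iff)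
lemma bp_add: "blockproj S (a + b) = blockproj S a + blockproj S b"
  by (simp add: blockproj_def vec_eq_iff)
lemma bp_scale: "blockproj S (c *\<^sub>R a) = c *\<^sub>R blockproj S a"
  by (simp add: blockproj_def vec_eq_iff)
lemma bp_sum: "blockproj S (\<Sum>i\<in>I. a i) = (\<Sum>i\<in>I. blockproj S (a i))"
  by (induction I rule: infinite_finite_induct) (auto simp: bp_add blockproj_def vec_eq_iff)

lemma bp_bp:
  fixes k :: nat
  assumes "i < k" "j < k" "\<forall>i<k. \<forall>j<k. i \<noteq> j \<longrightarrow> B i \<inter> B j = {}"
  shows "blockproj (B i) (blockproj (B j) y) = (if i = j then blockproj (B i) y else 0)"
  using assms by (auto simp: blockproj_def vec_eq_iff)

lemma sum_indic:
  fixes k :: nat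
  assumes disj: "\<forall>i<k. \<forall>j<k. i \<noteq> j \<longrightarrow> B i \<inter> B j = {}"
    and cov: "(\<Union>i<k. B i) = UNIV"
  shows "(\<Sum>i<k. if c \<in> B i then a else (0::'b::comm_monoid_add)) = a"
proof -
  obtain i0 where i0: "i0 < k" "c \<in> B i0" using cov by blast
  have "(\<Sum>i<k. if c \<in> B i then a else 0) = (\<Sum>i<k. if i = i0 then a else 0)"
    using disj i0 by (intro sum.cong) auto
  also have "\<dots> = a" using i0 by simp
  finally show ?thesis .
qed

lemma recon:
  fixes k :: nat
  assumes disj: "\<forall>i<k. \<forall>j<k. i \<noteq> j \<longrightarrow> B i \<inter> B j = {}"
    and cov: "(\<Union>i<k. B i) = UNIV"
  shows "(\<Sum>i<k. blockproj (B i) y) = y"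
proof -
  have "(\<Sum>i<k. blockproj (B i) y) $ c = y $ c" for c
    using sum_indic[OF disj cov, of c "y $ c"] by (simp add: blockproj_def)
  thus ?thesis by (simp add: vec_eq_iff)
qed

lemma norm2_blocks:
  fixes k :: nat
  assumes disj: "\<forall>i<k. \<forall>j<k. i \<noteq> j \<longrightarrow> B i \<inter> B j = {}"
    and cov: "(\<Union>i<k. B i) = UNIV"
  shows "(norm y)\<^sup>2 = (\<Sum>i<k. (norm (blockproj (B i) y))\<^sup>2)"
proof -
  have "(\<Sum>i<k. (norm (blockproj (B i) y))\<^sup>2) = (\<Sum>i<k. \<Sum>c\<in>UNIV. if c \<in> B i then y $ c * y $ c else 0)"
    by (simp add: power2_norm_eq_inner inner_vec_def blockproj_def if_distrib cong: if_cong)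
  also have "\<dots> = (\<Sum>c\<in>UNIV. \<Sum>i<k. if c \<in> B i then y $ c * y $ c else 0)"
    by (rule sum.swap)
  also have "\<dots> = (\<Sum>c\<in>UNIV. y $ c * y $ c)"
    by (intro sum.cong refl sum_indic[OF disj cov])
  also have "\<dots> = (norm y)\<^sup>2" by (simp add: power2_norm_eq_inner inner_vec_def)
  finally show ?thesis by simp
qed

lemma convex_Theta:
  fixes k :: nat
  assumes "\<forall>i<k. convex (Th i)"
  shows "convex (block_product k B Th)"
  using assms unfolding convex_def block_product_def by (auto simp: bp_add bp_scale)

lemma sum_swap_if:
  fixes a b :: "nat \<Rightarrow> real"
  shows "(\<Sum>i<k. \<Sum>j<k. if j = i then a j else b j) = (\<Sum>j<k. a j) + (real k - 1) * (\<Sum>j<k. b j)"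
proof -
  have "(\<Sum>i<k. \<Sum>j<k. if j = i then a j else b j) = (\<Sum>j<k. \<Sum>i<k. if j = i then a j else b j)"
    by (rule sum.swap)
  also have "\<dots> = (\<Sum>j<k. a j + (real k - 1) * b j)"
  proof (rule sum.cong)
    fix j assume j: "j \<in> {..<k}"
    have "(\<Sum>i<k. if j = i then a j else b j) = (\<Sum>i<k. b j + (if j = i then a j - b j else 0))"
      by (intro sum.cong) auto
    also have "\<dots> = real k * b j + (a j - b j)" using j by (simp add: sum.distrib)
    finally show "(\<Sum>i<k. if j = i then a j else b j) = a j + (real k - 1) * b j"
      by (simp add: algebra_simps)
  qed simp
  also have "\<dots> = (\<Sum>j<k. a j) + (real k - 1) * (\<Sum>j<k. b j)"
    by (simp add: sum.distrib sum_distrib_left)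
  finally show ?thesis .
qed



locale bcd =
  fixes k :: nat and B :: "nat \<Rightarrow> 'n::finite set" and Th :: "nat \<Rightarrow> (real ^ 'n) set"
    and f :: "real ^ 'n \<Rightarrow> real" and thstar :: "real ^ 'n" and L rho :: real
    and gs :: "nat list \<Rightarrow> nat \<Rightarrow> real ^ 'n \<Rightarrow> real" and x :: "nat list \<Rightarrow> real ^ 'n"
  assumes k_pos: "k \<ge> 1"
    and blocks_disj: "\<forall>i<k. \<forall>j<k. i \<noteq> j \<longrightarrow> B i \<inter> B j = {}"
    and blocks_cover: "(\<Union>i<k. B i) = UNIV"
    and Th_convex: "\<forall>i<k. convex (Th i)"
    and thstar_in: "thstar \<in> block_product k B Th"
    and thstar_min: "\<forall>t\<in>block_product k B Th. f thstar \<le> f t"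
    and x0_in: "x [] \<in> block_product k B Th"
    and rho_ge_L: "rho \<ge> L"
    and majorant: "\<forall>h. set h \<subseteq> {..<k} \<longrightarrow> (\<forall>y. f y \<le> separable_fun k B (gs h) y)"
    and surrogate: "\<forall>h. set h \<subseteq> {..<k} \<longrightarrow>
                      first_order_surrogate_sc (block_product k B Th) L rho f (x h) (separable_fun k B (gs h))"
    and update: "\<forall>h i. set h \<subseteq> {..<k} \<longrightarrow> i < k \<longrightarrow>
                   blockproj (B i) (x (h @ [i])) \<in> Th i
                 \<and> (\<forall>z\<in>Th i. gs h i (blockproj (B i) (x (h @ [i]))) \<le> gs h i z)
                 \<and> (\<forall>j<k. j \<noteq> i \<longrightarrow> blockproj (B j) (x (h @ [i])) = blockproj (B j) (x h))"
begin

abbreviation "Theta \<equiv> block_product k B Th"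
definition "g h = separable_fun k B (gs h)"
definition "th' h = (\<Sum>j<k. blockproj (B j) (x (h @ [j])))"
definition "Fv h = f (x h) - f thstar"
definition "Dv h = (norm (thstar - x h))\<^sup>2"

lemma upd: assumes "set h \<subseteq> {..<k}" "i < k"
  shows "blockproj (B i) (x (h @ [i])) \<in> Th i"
    and "\<And>z. z \<in> Th i \<Longrightarrow> gs h i (blockproj (B i) (x (h @ [i]))) \<le> gs h i z"
    and "\<And>j. j < k \<Longrightarrow> j \<noteq> i \<Longrightarrow> blockproj (B j) (x (h @ [i])) = blockproj (B j) (x h)"
  using update assms by blast+

lemma x_in: "set h \<subseteq> {..<k} \<Longrightarrow> x h \<in> Theta"
proof (induction h rule: rev_induct)
  case Nil then show ?case using x0_in by simp
next
  case (snoc i h)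
  then have h: "set h \<subseteq> {..<k}" and i: "i < k" by auto
  have "x h \<in> Theta" using snoc.IH h by simp
  then have "blockproj (B j) (x (h @ [i])) \<in> Th j" if "j < k" for j
    using upd[OF h i] that unfolding block_product_def by (cases "j = i") auto
  then show ?case unfolding block_product_def by blast
qed

lemma sur: assumes "set h \<subseteq> {..<k}"
  shows "strongly_convex_on UNIV (g h) rho"
    and "\<exists>grad. lipschitz_gradient L (\<lambda>y. g h y - f y) grad \<and> g h (x h) - f (x h) = 0 \<and> grad (x h) = 0"
proof -
  have "first_order_surrogate_sc Theta L rho f (x h) (g h)"
    using surrogate assms unfolding g_def by blast
  thus "strongly_convex_on UNIV (g h) rho"
    and "\<exists>grad. lipschitz_gradient L (\<lambda>y. g h y - f y) grad \<and> g h (x h) - f (x h) = 0 \<and> grad (x h) = 0"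
    unfolding first_order_surrogate_sc_def first_order_surrogate_def by blast+
qed

lemma L_nonneg: "0 \<le> L"
proof -
  obtain grad where lg: "lipschitz_gradient L (\<lambda>y. g [] y - f y) grad" using sur(2)[of "[]"] by auto
  then have lip: "norm (grad a - grad b) \<le> L * norm (a - b)" for a b
    unfolding lipschitz_gradient_def by auto
  obtain c :: 'n where True by blast
  have "0 < norm (axis c (1::real) - 0)" by (simp add: axis_def vec_eq_iff)
  moreover have "0 \<le> L * norm (axis c (1::real) - 0)"
    using lip[of "axis c 1" 0] norm_ge_zero[of "grad (axis c 1) - grad 0"] by linarith
  ultimately show ?thesis by (simp add: zero_le_mult_iff)
qed

lemma g_at: "set h \<subseteq> {..<k} \<Longrightarrow> g h (x h) = f (x h)"
  using sur(2) by fastforce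

lemma g_upper: assumes "set h \<subseteq> {..<k}" shows "g h y \<le> f y + L/2 * (norm (y - x h))\<^sup>2"
proof -
  obtain grad where "lipschitz_gradient L (\<lambda>y. g h y - f y) grad" "g h (x h) - f (x h) = 0" "grad (x h) = 0"
    using sur(2)[OF assms] by auto
  from descent[OF this, of y] have "g h y - f y \<le> L/2 * (norm (y - x h))\<^sup>2" by simp
  thus ?thesis by simp
qed

lemma f_le_g: "set h \<subseteq> {..<k} \<Longrightarrow> f y \<le> g h y"
  using majorant unfolding g_def by blast

lemma bp_th': assumes "i < k" shows "blockproj (B i) (th' h) = blockproj (B i) (x (h @ [i]))"
proof -
  have "blockproj (B i) (th' h) = (\<Sum>j<k. if i = j then blockproj (B i) (x (h @ [j])) else 0)"
    unfolding th'_def bp_sum using bp_bp[OF assms _ blocks_disj] by (intro sum.cong) auto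
  also have "\<dots> = blockproj (B i) (x (h @ [i]))" using assms by simp
  finally show ?thesis .
qed

lemma th'_in: "set h \<subseteq> {..<k} \<Longrightarrow> th' h \<in> Theta"
  unfolding block_product_def using bp_th' upd(1) by simp

lemma th'_min: assumes "set h \<subseteq> {..<k}" "z \<in> Theta" shows "g h (th' h) \<le> g h z"
proof -
  have "gs h j (blockproj (B j) (th' h)) \<le> gs h j (blockproj (B j) z)" if "j < k" for j
  proof -
    have "blockproj (B j) z \<in> Th j" using assms(2) that unfolding block_product_def by blast
    thus ?thesis using upd(2)[OF assms(1) that] bp_th'[OF that] by simp
  qed
  thus ?thesis unfolding g_def separable_fun_def by (intro sum_mono) auto
qed

lemma child_blocks: assumes "set h \<subseteq> {..<k}" "i < k" "j < k"
  shows "blockproj (B j) (x (h @ [i])) = (if j = i then blockproj (B j) (th' h) else blockproj (B j) (x h))"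
  using upd(3)[OF assms(1,2) assms(3)] bp_th'[OF assms(2)] by (cases "j = i") auto

lemma sum_g: assumes "set h \<subseteq> {..<k}"
  shows "(\<Sum>i<k. g h (x (h @ [i]))) = g h (th' h) + (real k - 1) * g h (x h)"
proof -
  have "(\<Sum>i<k. g h (x (h @ [i]))) = (\<Sum>i<k. \<Sum>j<k. if j = i then gs h j (blockproj (B j) (th' h)) else gs h j (blockproj (B j) (x h)))"
    unfolding g_def separable_fun_def using child_blocks[OF assms]
    by (intro sum.cong refl) auto
  also have "\<dots> = g h (th' h) + (real k - 1) * g h (x h)"
    unfolding sum_swap_if g_def separable_fun_def ..
  finally show ?thesis .
qed

lemma sum_D: assumes "set h \<subseteq> {..<k}"
  shows "(\<Sum>i<k. Dv (h @ [i])) = (norm (thstar - th' h))\<^sup>2 + (real k - 1) * Dv h"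
proof -
  have nb: "(norm (a - b))\<^sup>2 = (\<Sum>j<k. (norm (blockproj (B j) a - blockproj (B j) b))\<^sup>2)" for a b
    using norm2_blocks[OF blocks_disj blocks_cover, of "a - b"] by (simp add: bp_diff)
  have "(\<Sum>i<k. Dv (h @ [i])) = (\<Sum>i<k. \<Sum>j<k. (norm (blockproj (B j) thstar - blockproj (B j) (x (h @ [i]))))\<^sup>2)"
    unfolding Dv_def by (intro sum.cong refl nb)
  also have "\<dots> = (\<Sum>i<k. \<Sum>j<k. if j = i then (norm (blockproj (B j) thstar - blockproj (B j) (th' h)))\<^sup>2 else (norm (blockproj (B j) thstar - blockproj (B j) (x h)))\<^sup>2)"
    using child_blocks[OF assms] by (intro sum.cong refl) auto
  also have "\<dots> = (\<Sum>j<k. (norm (blockproj (B j) thstar - blockproj (B j) (th' h)))\<^sup>2) + (real k - 1) * (\<Sum>j<k. (norm (blockproj (B j) thstar - blockproj (B j) (x h)))\<^sup>2)"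
    by (rule sum_swap_if)
  also have "\<dots> = (norm (thstar - th' h))\<^sup>2 + (real k - 1) * Dv h"
    unfolding Dv_def nb[symmetric] ..
  finally show ?thesis .
qed

lemma mono_step: assumes "set h \<subseteq> {..<k}" "i < k" shows "f (x (h @ [i])) \<le> f (x h)"
proof -
  have xh: "x h \<in> Theta" using x_in assms by simp
  have "g h (x (h @ [i])) \<le> g h (x h)"
    unfolding g_def separable_fun_def
  proof (rule sum_mono)
    fix j assume j: "j \<in> {..<k}"
    show "gs h j (blockproj (B j) (x (h @ [i]))) \<le> gs h j (blockproj (B j) (x h))"
    proof (cases "j = i")
      case True
      have "blockproj (B i) (x h) \<in> Th i" using xh assms(2) unfolding block_product_def by blast
      then show ?thesis using upd(2)[OF assms] True by simp
    next
      case False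
      then show ?thesis using upd(3)[OF assms, of j] j by simp
    qed
  qed
  thus ?thesis using f_le_g[OF assms(1)] g_at[OF assms(1)] by (metis order_trans)
qed

lemma Fv_nonneg: "set h \<subseteq> {..<k} \<Longrightarrow> 0 \<le> Fv h"
  using x_in thstar_min unfolding Fv_def by auto

lemma key_th': assumes "set h \<subseteq> {..<k}"
  shows "g h (th' h) + rho/2 * (norm (thstar - th' h))\<^sup>2 \<le> f thstar + L/2 * Dv h"
proof -
  have "g h (th' h) + rho/2 * (norm (thstar - th' h))\<^sup>2 \<le> g h thstar"
    using sc_min[OF sur(1)[OF assms] convex_Theta[OF Th_convex] th'_in[OF assms] thstar_in]
      th'_min[OF assms] by blast
  also have "\<dots> \<le> f thstar + L/2 * Dv h" using g_upper[OF assms, of thstar]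
    unfolding Dv_def by (simp add: norm_minus_commute)
  finally show ?thesis .
qed

lemma node1: assumes "set h \<subseteq> {..<k}"
  shows "(\<Sum>i<k. Fv (h @ [i])) + rho/2 * (\<Sum>i<k. Dv (h @ [i]))
        \<le> (real k - 1) * Fv h + (L + (real k - 1) * rho)/2 * Dv h"
proof -
  have s1: "(\<Sum>i<k. f (x (h @ [i]))) \<le> (\<Sum>i<k. g h (x (h @ [i])))"
    using f_le_g[OF assms] by (intro sum_mono) auto
  have s2: "(\<Sum>i<k. Fv (h @ [i])) = (\<Sum>i<k. f (x (h @ [i]))) - real k * f thstar"
    unfolding Fv_def by (simp add: sum_subtractf)
  define d where "d = (norm (thstar - th' h))\<^sup>2"
  have kt: "g h (th' h) + rho/2 * d \<le> f thstar + L/2 * Dv h" using key_th'[OF assms] unfolding d_def .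
  have "(\<Sum>i<k. Fv (h @ [i])) \<le> g h (th' h) + (real k - 1) * f (x h) - real k * f thstar"
    using s1 s2 sum_g[OF assms] g_at[OF assms] by simp
  moreover have "rho/2 * (\<Sum>i<k. Dv (h @ [i])) = rho/2 * d + rho/2 * ((real k - 1) * Dv h)"
    unfolding sum_D[OF assms] d_def by (simp add: distrib_left)
  moreover have "(real k - 1) * Fv h + (L + (real k - 1) * rho)/2 * Dv h
     = (real k - 1) * f (x h) - (real k - 1) * f thstar + L/2 * Dv h + rho/2 * ((real k - 1) * Dv h)"
    unfolding Fv_def by (simp add: field_simps)
  ultimately show ?thesis using kt by (simp add: algebra_simps)
qed

lemma sc_f: assumes "strongly_convex_on UNIV f mu" "set h \<subseteq> {..<k}"
  shows "mu/2 * Dv h \<le> Fv h"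
  using sc_min[OF assms(1) convex_Theta[OF Th_convex] thstar_in x_in[OF assms(2)]] thstar_min
  unfolding Dv_def Fv_def by (simp add: norm_minus_commute)

lemma node3: assumes "strongly_convex_on UNIV f mu" "mu > 0" "set h \<subseteq> {..<k}"
  shows "(\<Sum>i<k. Dv (h @ [i])) \<le> (real k - 1 + L/(rho+mu)) * Dv h"
proof -
  define d where "d = (norm (thstar - th' h))\<^sup>2"
  have kt: "g h (th' h) + rho/2 * d \<le> f thstar + L/2 * Dv h" using key_th'[OF assms(3)] unfolding d_def .
  have "f thstar + mu/2 * d \<le> f (th' h)"
    using sc_min[OF assms(1) convex_Theta[OF Th_convex] thstar_in th'_in[OF assms(3)]] thstar_min
    unfolding d_def by (simp add: norm_minus_commute)
  moreover have "f (th' h) \<le> g h (th' h)" using f_le_g[OF assms(3)] .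
  ultimately have "(rho + mu) * d \<le> L * Dv h" using kt by (simp add: algebra_simps)
  moreover have rm: "rho + mu > 0" using L_nonneg rho_ge_L assms(2) by linarith
  ultimately have "d \<le> L / (rho + mu) * Dv h" by (simp add: field_simps)
  thus ?thesis using sum_D[OF assms(3)] unfolding d_def by (simp add: algebra_simps)
qed

end


lemma Hs_Suc_sum:
  fixes \<phi> :: "nat list \<Rightarrow> real"
  shows "(\<Sum>h\<in>{h. set h \<subseteq> {..<k} \<and> length h = Suc n}. \<phi> h)
       = (\<Sum>h\<in>{h. set h \<subseteq> {..<k} \<and> length h = n}. \<Sum>i<k. \<phi> (h @ [i]))"
proof -
  let ?H = "{h. set h \<subseteq> {..<k} \<and> length h = n}"
  have img: "{h. set h \<subseteq> {..<k} \<and> length h = Suc n} = (\<lambda>(h, i). h @ [i]) ` (?H \<times> {..<k})"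
  proof (intro equalityI subsetI)
    fix h assume h: "h \<in> {h. set h \<subseteq> {..<k} \<and> length h = Suc n}"
    then have "h \<noteq> []" by auto
    then have "h = butlast h @ [last h]" by simp
    moreover have "butlast h \<in> ?H" using h by (auto dest: in_set_butlastD)
    moreover have "last h \<in> set h" using \<open>h \<noteq> []\<close> by simp
    then have "last h \<in> {..<k}" using h by auto
    ultimately show "h \<in> (\<lambda>(h, i). h @ [i]) ` (?H \<times> {..<k})" by force
  qed auto
  have inj: "inj_on (\<lambda>(h, i). h @ [i]) (?H \<times> {..<k})"
    by (auto simp: inj_on_def)
  have "(\<Sum>h\<in>{h. set h \<subseteq> {..<k} \<and> length h = Suc n}. \<phi> h) = (\<Sum>p\<in>?H \<times> {..<k}. \<phi> ((\<lambda>(h, i). h @ [i]) p))"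
    unfolding img using sum.reindex[OF inj, of \<phi>] by (simp add: o_def)
  also have "\<dots> = (\<Sum>h\<in>?H. \<Sum>i<k. \<phi> (h @ [i]))"
    by (simp add: sum.cartesian_product split_def)
  finally show ?thesis .
qed

context bcd begin

definition "Hs n = {h. set h \<subseteq> {..<k} \<and> length h = n}"
definition "E n = (\<Sum>h\<in>Hs n. Fv h) / real k ^ n"
definition "D n = (\<Sum>h\<in>Hs n. Dv h) / real k ^ n"

lemma Hs_finite: "finite (Hs n)"
  unfolding Hs_def by (rule finite_lists_length_eq) simp

lemma Hs_0: "Hs 0 = {[]}" unfolding Hs_def by auto

lemma E0: "E 0 = Fv []" and D0: "D 0 = Dv []"
  unfolding E_def D_def Hs_0 by simp_all

lemma kpos: "real k > 0" using k_pos by simp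

lemma kn_pos: "real k ^ n > 0" using kpos by simp

lemma E_nn: "0 \<le> E n" unfolding E_def using Fv_nonneg
  by (intro divide_nonneg_pos sum_nonneg kn_pos) (auto simp: Hs_def)

lemma D_nn: "0 \<le> D n" unfolding D_def Dv_def
  by (intro divide_nonneg_pos sum_nonneg kn_pos) auto

lemma E_rec: "E (Suc n) + rho/2 * D (Suc n) \<le> (1 - 1/real k) * E n + ((1 - 1/real k) * rho + (1/real k) * L)/2 * D n"
proof -
  define SE where "SE = (\<Sum>h\<in>Hs n. Fv h)"
  define SD where "SD = (\<Sum>h\<in>Hs n. Dv h)"
  define SE' where "SE' = (\<Sum>h\<in>Hs (Suc n). Fv h)"
  define SD' where "SD' = (\<Sum>h\<in>Hs (Suc n). Dv h)"
  have e1: "SE' = (\<Sum>h\<in>Hs n. \<Sum>i<k. Fv (h @ [i]))" unfolding SE'_def Hs_def by (rule Hs_Suc_sum)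
  have e2: "SD' = (\<Sum>h\<in>Hs n. \<Sum>i<k. Dv (h @ [i]))" unfolding SD'_def Hs_def by (rule Hs_Suc_sum)
  have "SE' + rho/2 * SD' = (\<Sum>h\<in>Hs n. (\<Sum>i<k. Fv (h @ [i])) + rho/2 * (\<Sum>i<k. Dv (h @ [i])))"
    unfolding e1 e2 by (simp add: sum.distrib sum_distrib_left)
  also have "\<dots> \<le> (\<Sum>h\<in>Hs n. (real k - 1) * Fv h + (L + (real k - 1) * rho)/2 * Dv h)"
    using node1 by (intro sum_mono) (auto simp: Hs_def)
  also have "\<dots> = (real k - 1) * SE + (L + (real k - 1) * rho)/2 * SD"
    unfolding SE_def SD_def by (simp add: sum.distrib sum_distrib_left)
  finally have ineq: "SE' + rho/2 * SD' \<le> (real k - 1) * SE + (L + (real k - 1) * rho)/2 * SD" .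
  have K: "real k ^ Suc n > 0" using kpos by simp
  have l: "E (Suc n) + rho/2 * D (Suc n) = (SE' + rho/2 * SD') / real k ^ Suc n"
    unfolding E_def D_def SE'_def SD'_def by (simp add: add_divide_distrib)
  have r: "(1 - 1/real k) * E n + ((1 - 1/real k) * rho + (1/real k) * L)/2 * D n
         = ((real k - 1) * SE + (L + (real k - 1) * rho)/2 * SD) / real k ^ Suc n"
    unfolding E_def D_def SE_def SD_def using kpos by (simp add: field_simps)
  show ?thesis unfolding l r using ineq K by (simp add: divide_right_mono)
qed

lemma E_mono: "E (Suc n) \<le> E n"
proof -
  have "(\<Sum>h\<in>Hs (Suc n). Fv h) = (\<Sum>h\<in>Hs n. \<Sum>i<k. Fv (h @ [i]))" unfolding Hs_def by (rule Hs_Suc_sum)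
  also have "\<dots> \<le> (\<Sum>h\<in>Hs n. \<Sum>i<k. Fv h)"
    using mono_step unfolding Fv_def by (intro sum_mono) (auto simp: Hs_def)
  also have "\<dots> = real k * (\<Sum>h\<in>Hs n. Fv h)" by (simp add: sum_distrib_left)
  finally have ineq: "(\<Sum>h\<in>Hs (Suc n). Fv h) \<le> real k * (\<Sum>h\<in>Hs n. Fv h)" .
  have "E (Suc n) = (\<Sum>h\<in>Hs (Suc n). Fv h) / real k ^ Suc n" unfolding E_def ..
  also have "\<dots> \<le> real k * (\<Sum>h\<in>Hs n. Fv h) / real k ^ Suc n"
    using ineq kn_pos by (intro divide_right_mono) auto
  also have "\<dots> = E n" unfolding E_def using kpos by simp
  finally show ?thesis .
qed

lemma E_ge: assumes "strongly_convex_on UNIV f mu" shows "mu/2 * D n \<le> E n"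
proof -
  have "mu/2 * (\<Sum>h\<in>Hs n. Dv h) \<le> (\<Sum>h\<in>Hs n. Fv h)"
    unfolding sum_distrib_left using sc_f[OF assms] by (intro sum_mono) (auto simp: Hs_def)
  hence "mu/2 * (\<Sum>h\<in>Hs n. Dv h) / real k ^ n \<le> (\<Sum>h\<in>Hs n. Fv h) / real k ^ n"
    using kn_pos by (intro divide_right_mono) auto
  thus ?thesis unfolding E_def D_def by simp
qed

lemma D_rec: assumes "strongly_convex_on UNIV f mu" "mu > 0"
  shows "D (Suc n) \<le> ((1 - 1/real k) + 1/real k * (L/(rho+mu))) * D n"
proof -
  have "(\<Sum>h\<in>Hs (Suc n). Dv h) = (\<Sum>h\<in>Hs n. \<Sum>i<k. Dv (h @ [i]))" unfolding Hs_def by (rule Hs_Suc_sum)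
  also have "\<dots> \<le> (\<Sum>h\<in>Hs n. (real k - 1 + L/(rho+mu)) * Dv h)"
    using node3[OF assms] by (intro sum_mono) (auto simp: Hs_def)
  also have "\<dots> = (real k - 1 + L/(rho+mu)) * (\<Sum>h\<in>Hs n. Dv h)" by (simp add: sum_distrib_left)
  finally have ineq: "(\<Sum>h\<in>Hs (Suc n). Dv h) \<le> (real k - 1 + L/(rho+mu)) * (\<Sum>h\<in>Hs n. Dv h)" .
  have "D (Suc n) \<le> (real k - 1 + L/(rho+mu)) * (\<Sum>h\<in>Hs n. Dv h) / real k ^ Suc n"
    unfolding D_def using ineq kn_pos by (intro divide_right_mono) auto
  also have "\<dots> = ((real k - 1 + L/(rho+mu)) / real k) * D n"
    unfolding D_def by simp
  also have "(real k - 1 + L/(rho+mu)) / real k = (1 - 1/real k) + 1/real k * (L/(rho+mu))"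
    using kpos by (simp add: diff_divide_distrib add_divide_distrib)
  finally show ?thesis .
qed

end


lemma history_eq_iff: "length h = n \<Longrightarrow> history iota n w = h \<longleftrightarrow> (\<forall>j<n. iota j w = h ! j)"
  unfolding history_def by (auto simp: list_eq_iff_nth_eq)

lemma history_Suc: "history iota (Suc n) w = history iota n w @ [iota n w]"
  unfolding history_def by simp

lemma history_set: "(\<forall>j. iota j w < k) \<Longrightarrow> set (history iota n w) \<subseteq> {..<k} \<and> length (history iota n w) = n"
  unfolding history_def by auto

context prob_space begin

lemma iota_rv:
  fixes iota :: "nat \<Rightarrow> 'a \<Rightarrow> nat"
  assumes ind: "indep_vars (\<lambda>_. count_space UNIV) iota UNIV"
  shows "iota j \<in> measurable M (count_space UNIV)"
  using ind unfolding indep_vars_def2 by auto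

lemma iota_ev:
  fixes iota :: "nat \<Rightarrow> 'a \<Rightarrow> nat"
  assumes ind: "indep_vars (\<lambda>_. count_space UNIV) iota UNIV"
  shows "{w \<in> space M. iota j w = i} \<in> events"
proof -
  have "{w \<in> space M. iota j w = i} = iota j -` {i} \<inter> space M" by auto
  thus ?thesis using measurable_sets[OF iota_rv[OF ind], of "{i}"] by simp
qed

lemma iota_AE:
  fixes iota :: "nat \<Rightarrow> 'a \<Rightarrow> nat"
  assumes ind: "indep_vars (\<lambda>_. count_space UNIV) iota UNIV"
    and unif: "\<forall>n. \<forall>i<k. measure M {w \<in> space M. iota n w = i} = 1 / real k"
    and k: "k \<ge> 1"
  shows "AE w in M. \<forall>j. iota j w < k"
proof -
  have "AE w in M. iota j w < k" for j
  proof -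
    have U: "{w \<in> space M. iota j w < k} = (\<Union>i\<in>{..<k}. {w \<in> space M. iota j w = i})" by auto
    have "prob (\<Union>i\<in>{..<k}. {w \<in> space M. iota j w = i}) = (\<Sum>i\<in>{..<k}. prob {w \<in> space M. iota j w = i})"
      by (rule finite_measure_finite_Union) (auto simp: iota_ev[OF ind] disjoint_family_on_def)
    also have "\<dots> = 1" using unif k by simp
    finally have "prob {w \<in> space M. iota j w < k} = 1" unfolding U .
    moreover have "{w \<in> space M. iota j w < k} \<in> events" unfolding U
      by (intro sets.finite_UN) (auto simp: iota_ev[OF ind])
    ultimately show ?thesis using prob_Collect_eq_1[of "\<lambda>w. iota j w < k"] by simp
  qed
  then have "\<forall>j. AE w in M. iota j w < k" by blast
  thus ?thesis using AE_all_countable[of "\<lambda>j w. iota j w < k" M] by blast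
qed

lemma iota_out:
  fixes iota :: "nat \<Rightarrow> 'a \<Rightarrow> nat"
  assumes ind: "indep_vars (\<lambda>_. count_space UNIV) iota UNIV"
    and unif: "\<forall>n. \<forall>i<k. measure M {w \<in> space M. iota n w = i} = 1 / real k"
    and k: "k \<ge> 1" and i: "\<not> i < k"
  shows "prob {w \<in> space M. iota j w = i} = 0"
proof -
  have "AE w in M. w \<notin> {w \<in> space M. iota j w = i}"
    using iota_AE[OF ind unif k] i by (auto elim!: eventually_mono)
  thus ?thesis using prob_eq_0[OF iota_ev[OF ind]] by blast
qed

lemma hist_ev:
  fixes iota :: "nat \<Rightarrow> 'a \<Rightarrow> nat"
  assumes ind: "indep_vars (\<lambda>_. count_space UNIV) iota UNIV"
  shows "{w \<in> space M. history iota n w = h} \<in> events"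
proof (cases "length h = n")
  case True
  have "{w \<in> space M. history iota n w = h} = {w \<in> space M. \<forall>j\<in>{..<n}. iota j w = h ! j}"
    using history_eq_iff[OF True, of iota] by blast
  also have "\<dots> \<in> events"
    by (intro sets.sets_Collect_finite_All) (auto simp: iota_ev[OF ind])
  finally show ?thesis .
next
  case False
  then have "{w \<in> space M. history iota n w = h} = {}" unfolding history_def by auto
  then show ?thesis by (metis sets.empty_sets)
qed

lemma hist_meas:
  fixes iota :: "nat \<Rightarrow> 'a \<Rightarrow> nat"
  assumes ind: "indep_vars (\<lambda>_. count_space UNIV) iota UNIV"
  shows "(\<lambda>w. history iota n w) \<in> measurable M (count_space UNIV)"
proof -
  have "(\<lambda>w. history iota n w) -` {h} \<inter> space M \<in> sets M" for h
    using hist_ev[OF ind, of n h] by (simp add: vimage_def Int_def conj_commute)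
  thus ?thesis by (subst measurable_count_space_eq_countable) auto
qed

lemma prob_hist:
  fixes iota :: "nat \<Rightarrow> 'a \<Rightarrow> nat"
  assumes ind: "indep_vars (\<lambda>_. count_space UNIV) iota UNIV"
    and unif: "\<forall>n. \<forall>i<k. measure M {w \<in> space M. iota n w = i} = 1 / real k"
    and k: "k \<ge> 1" and len: "length h = n"
  shows "prob {w \<in> space M. history iota n w = h} = (if set h \<subseteq> {..<k} then 1 / real k ^ n else 0)"
proof (cases "n = 0")
  case True
  then have "h = []" using len by simp
  then show ?thesis using True by (simp add: history_def prob_space)
next
  case False
  define A where "A j = iota j -` {h ! j} \<inter> space M" for j
  have eq: "{w \<in> space M. history iota n w = h} = (\<Inter>j\<in>{..<n}. A j)"
    using history_eq_iff[OF len, of iota] False unfolding A_def by blast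
  have indep: "indep_sets (\<lambda>i. {iota i -` A \<inter> space M | A. A \<in> sets (count_space UNIV)}) UNIV"
    using ind unfolding indep_vars_def2 by auto
  have "prob (\<Inter>j\<in>{..<n}. A j) = (\<Prod>j\<in>{..<n}. prob (A j))"
    by (rule indep_setsD[OF indep]) (use False in \<open>auto simp: A_def\<close>)
  also have "\<dots> = (\<Prod>j\<in>{..<n}. if h ! j < k then 1 / real k else 0)"
  proof (rule prod.cong)
    fix j assume "j \<in> {..<n}"
    have "A j = {w \<in> space M. iota j w = h ! j}" unfolding A_def by auto
    then show "prob (A j) = (if h ! j < k then 1 / real k else 0)"
      using unif iota_out[OF ind unif k] by auto
  qed simp
  also have "\<dots> = (if set h \<subseteq> {..<k} then 1 / real k ^ n else 0)"
  proof (cases "set h \<subseteq> {..<k}")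
    case True
    then have "\<forall>j<n. h ! j < k" using len by (auto simp: set_conv_nth)
    then show ?thesis using True by (simp add: power_one_over)
  next
    case False
    then obtain j where "j < n" "\<not> h ! j < k" using len by (auto simp: set_conv_nth)
    then have "(\<Prod>j<n. if h ! j < k then 1 / real k else 0) = 0" by (intro prod_zero) auto
    then show ?thesis using False by simp
  qed
  finally show ?thesis unfolding eq .
qed

lemma hist_int:
  fixes \<phi> :: "nat list \<Rightarrow> real"
  fixes iota :: "nat \<Rightarrow> 'a \<Rightarrow> nat"
  assumes ind: "indep_vars (\<lambda>_. count_space UNIV) iota UNIV"
    and unif: "\<forall>n. \<forall>i<k. measure M {w \<in> space M. iota n w = i} = 1 / real k"
    and k: "k \<ge> 1"
  shows "integral\<^sup>L M (\<lambda>w. \<phi> (history iota n w)) = (\<Sum>h\<in>{h. set h \<subseteq> {..<k} \<and> length h = n}. \<phi> h) / real k ^ n"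
proof -
  let ?H = "{h. set h \<subseteq> {..<k} \<and> length h = n}"
  have fin: "finite ?H" by (rule finite_lists_length_eq) simp
  have m1: "(\<lambda>w. \<phi> (history iota n w)) \<in> borel_measurable M"
    using measurable_compose[OF hist_meas[OF ind], of \<phi> borel] by simp
  have m2: "(\<lambda>w. \<Sum>h\<in>?H. \<phi> h * indicator {w \<in> space M. history iota n w = h} w) \<in> borel_measurable M"
    using hist_ev[OF ind] by (intro borel_measurable_sum borel_measurable_times borel_measurable_const
        borel_measurable_indicator) auto
  have ae: "AE w in M. \<phi> (history iota n w) = (\<Sum>h\<in>?H. \<phi> h * indicator {w \<in> space M. history iota n w = h} w)"
    using iota_AE[OF ind unif k] AE_space
  proof eventually_elim
    case (elim w)
    then have hw: "history iota n w \<in> ?H" using history_set[of iota w k n] by auto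
    have "(\<Sum>h\<in>?H. \<phi> h * indicator {w \<in> space M. history iota n w = h} w)
        = (\<Sum>h\<in>?H. if h = history iota n w then \<phi> h else 0)"
      using elim by (intro sum.cong) (auto simp: indicator_def)
    also have "\<dots> = \<phi> (history iota n w)" using fin hw by simp
    finally show ?case by simp
  qed
  have "integral\<^sup>L M (\<lambda>w. \<phi> (history iota n w))
      = integral\<^sup>L M (\<lambda>w. \<Sum>h\<in>?H. \<phi> h * indicator {w \<in> space M. history iota n w = h} w)"
    by (rule integral_cong_AE[OF m1 m2 ae])
  also have "\<dots> = (\<Sum>h\<in>?H. integral\<^sup>L M (\<lambda>w. \<phi> h * indicator {w \<in> space M. history iota n w = h} w))"
    by (rule Bochner_Integration.integral_sum[where I = ?H and f = "\<lambda>h w. \<phi> h * indicator {w \<in> space M. history iota n w = h} w"]) (use hist_ev[OF ind] in \<open>auto intro!: integrable_mult_right integrable_real_indicator simp: less_top[symmetric]\<close>)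
  also have "\<dots> = (\<Sum>h\<in>?H. \<phi> h * (1 / real k ^ n))"
  proof (rule sum.cong)
    fix h assume "h \<in> ?H"
    then show "integral\<^sup>L M (\<lambda>w. \<phi> h * indicator {w \<in> space M. history iota n w = h} w) = \<phi> h * (1 / real k ^ n)"
      using prob_hist[OF ind unif k, of h n] by (simp add: Int_absorb2)
  qed simp
  also have "\<dots> = (\<Sum>h\<in>?H. \<phi> h) / real k ^ n" by (simp add: sum_divide_distrib)
  finally show ?thesis .
qed

end


theorem proposition3p3:
  fixes k :: nat
    and B :: "nat \<Rightarrow> 'n::finite set"
    and Th :: "nat \<Rightarrow> (real ^ 'n) set"
    and f :: "real ^ 'n \<Rightarrow> real"
    and thstar :: "real ^ 'n"
    and L rho :: real
    and M :: "'w measure"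
    and iota :: "nat \<Rightarrow> 'w \<Rightarrow> nat"
    and gs :: "nat list \<Rightarrow> nat \<Rightarrow> real ^ 'n \<Rightarrow> real"
    and x :: "nat list \<Rightarrow> real ^ 'n"
  defines "Theta \<equiv> block_product k B Th"
    and "delta \<equiv> 1 / real k"
    and "C0 \<equiv> (1 - 1 / real k) * (f (x []) - f thstar)
              + ((1 - 1 / real k) * rho + (1 / real k) * L) / 2 * (norm (x [] - thstar))\<^sup>2"
  assumes k_pos: "k \<ge> 1"
    and blocks_disj: "\<forall>i<k. \<forall>j<k. i \<noteq> j \<longrightarrow> B i \<inter> B j = {}"
    and blocks_cover: "(\<Union>i<k. B i) = UNIV"
    and Th_convex: "\<forall>i<k. convex (Th i)"
    and Th_block: "\<forall>i<k. Th i \<subseteq> {y. \<forall>j. j \<notin> B i \<longrightarrow> y $ j = 0}"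
    and f_cont: "continuous_on UNIV f"
    and f_convex: "convex_on UNIV f"
    and f_bdd: "bdd_below (range f)"
    and thstar_in: "thstar \<in> Theta"
    and thstar_min: "\<forall>t\<in>Theta. f thstar \<le> f t"
    and x0_in: "x [] \<in> Theta"
    and rho_ge_L: "rho \<ge> L"
    and majorant: "\<forall>h. set h \<subseteq> {..<k} \<longrightarrow> (\<forall>y. f y \<le> separable_fun k B (gs h) y)"
    and surrogate: "\<forall>h. set h \<subseteq> {..<k} \<longrightarrow>
                      first_order_surrogate_sc Theta L rho f (x h) (separable_fun k B (gs h))"
    and update: "\<forall>h i. set h \<subseteq> {..<k} \<longrightarrow> i < k \<longrightarrow>
                   blockproj (B i) (x (h @ [i])) \<in> Th i
                 \<and> (\<forall>z\<in>Th i. gs h i (blockproj (B i) (x (h @ [i]))) \<le> gs h i z)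
                 \<and> (\<forall>j<k. j \<noteq> i \<longrightarrow> blockproj (B j) (x (h @ [i])) = blockproj (B j) (x h))"
    and M_prob: "prob_space M"
    and iota_indep: "prob_space.indep_vars M (\<lambda>_. count_space UNIV) iota UNIV"
    and iota_unif: "\<forall>n. \<forall>i<k. measure M {w \<in> space M. iota n w = i} = 1 / real k"
  shows "(AE w in M. (\<lambda>n. f (x (history iota n w))) \<longlonglongrightarrow> f thstar)
       \<and> (\<forall>n\<ge>1. (\<integral>w. f (x (history iota n w)) - f thstar \<partial>M)
                  \<le> C0 / ((1 - delta) + delta * real n))
       \<and> (\<forall>mu>0. strongly_convex_on UNIV f mu \<longrightarrow>
           (\<forall>n\<ge>1.
              L / 2 * (\<integral>w. (norm (thstar - x (history iota n w)))\<^sup>2 \<partial>M)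
                \<le> C0 * ((1 - delta) + delta * (L / (rho + mu))) ^ n
            \<and> (\<integral>w. f (x (history iota n w)) - f thstar \<partial>M)
                \<le> C0 / delta * ((1 - delta) + delta * (L / (rho + mu))) ^ (n - 1)))"
proof -
  interpret P: prob_space M by (rule M_prob)
  have bcd: "bcd k B Th f thstar L rho gs x"
    unfolding bcd_def using k_pos blocks_disj blocks_cover Th_convex thstar_in thstar_min x0_in
      rho_ge_L majorant surrogate update unfolding Theta_def by blast
  interpret Q: bcd k B Th f thstar L rho gs x by (rule bcd)
  define dl where "dl = 1 / real k"
  define c where "c = (1 - 1 / real k) * rho + (1 / real k) * L"
  have kpos: "real k > 0" using k_pos by simp
  have dl0: "0 < dl" "dl \<le> 1" unfolding dl_def using k_pos by auto
  have L0: "0 \<le> L" by (rule Q.L_nonneg)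
  have cr: "c \<le> rho"
  proof -
    have "rho - c = (1 / real k) * (rho - L)" unfolding c_def using kpos by (simp add: field_simps)
    also have "\<dots> \<ge> 0" using rho_ge_L kpos by simp
    finally show ?thesis by simp
  qed
  have r0: "0 \<le> rho" using L0 rho_ge_L by linarith
  have C0eq: "C0 = (1 - dl) * Q.E 0 + c/2 * Q.D 0"
    unfolding C0_def dl_def c_def Q.E0 Q.D0 Q.Fv_def Q.Dv_def by (simp add: norm_minus_commute)
  have intE: "(\<integral>w. f (x (history iota n w)) - f thstar \<partial>M) = Q.E n" for n
    using P.hist_int[OF iota_indep iota_unif k_pos, of Q.Fv n]
    unfolding Q.E_def Q.Hs_def Q.Fv_def by simp
  have intD: "(\<integral>w. (norm (thstar - x (history iota n w)))\<^sup>2 \<partial>M) = Q.D n" for n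
    using P.hist_int[OF iota_indep iota_unif k_pos, of Q.Dv n]
    unfolding Q.D_def Q.Hs_def Q.Dv_def by simp
  have recE: "Q.E (Suc n) + rho/2 * Q.D (Suc n) \<le> (1 - dl) * Q.E n + c/2 * Q.D n" for n
    using Q.E_rec[of n] unfolding dl_def c_def .
  have bound1: "Q.E n \<le> C0 / ((1 - delta) + delta * real n)" if n: "n \<ge> 1" for n
  proof -
    have "Q.E n * ((1 - dl) + dl * real n) \<le> C0"
      unfolding C0eq by (rule seq_bound1[where E=Q.E and D=Q.D and dl=dl and c=c and r=rho, OF dl0 cr r0 Q.D_nn Q.E_mono recE n])
    moreover have "(1 - dl) + dl * real n > 0" using dl0 n
      by (smt (verit) mult_le_cancel_left1 of_nat_1 of_nat_mono)
    ultimately show ?thesis unfolding delta_def dl_def[symmetric] by (simp add: pos_le_divide_eq)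
  qed
  have part2: "\<forall>n\<ge>1. (\<integral>w. f (x (history iota n w)) - f thstar \<partial>M) \<le> C0 / ((1 - delta) + delta * real n)"
    using bound1 intE by simp
  have part3: "\<forall>mu>0. strongly_convex_on UNIV f mu \<longrightarrow>
           (\<forall>n\<ge>1.
              L / 2 * (\<integral>w. (norm (thstar - x (history iota n w)))\<^sup>2 \<partial>M)
                \<le> C0 * ((1 - delta) + delta * (L / (rho + mu))) ^ n
            \<and> (\<integral>w. f (x (history iota n w)) - f thstar \<partial>M)
                \<le> C0 / delta * ((1 - delta) + delta * (L / (rho + mu))) ^ (n - 1))"
  proof (intro allI impI conjI)
    fix mu :: real and n :: nat
    assume mu: "mu > 0" and sc: "strongly_convex_on UNIV f mu" and n: "n \<ge> 1"
    have ceq: "c = dl * L + (1 - dl) * rho" unfolding c_def dl_def by simp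
    have Dq: "Q.D (Suc m) \<le> ((1-dl) + dl * (L/(rho+mu))) * Q.D m" for m
      using Q.D_rec[OF sc mu, of m] unfolding dl_def .
    note sb = seq_bound2[where E=Q.E and D=Q.D and dl=dl and c=c and r=rho and L=L and mu=mu, OF dl0 rho_ge_L L0 mu ceq Q.D_nn Q.E_nn recE Dq Q.E_ge[OF sc] n]
    show "L / 2 * (\<integral>w. (norm (thstar - x (history iota n w)))\<^sup>2 \<partial>M)
                \<le> C0 * ((1 - delta) + delta * (L / (rho + mu))) ^ n"
      using sb(1) unfolding intD C0eq delta_def dl_def .
    show "(\<integral>w. f (x (history iota n w)) - f thstar \<partial>M)
                \<le> C0 / delta * ((1 - delta) + delta * (L / (rho + mu))) ^ (n - 1)"
      using sb(2) unfolding intE C0eq delta_def dl_def .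
  qed
  define Fh where "Fh n w = Q.Fv (history iota n w)" for n w
  have Fh_meas: "(\<lambda>w. Fh n w) \<in> borel_measurable M" for n
    unfolding Fh_def using measurable_compose[OF P.hist_meas[OF iota_indep], of Q.Fv borel] by simp
  have Fh_ev: "{w \<in> space M. e \<le> Fh n w} \<in> P.events" for e n
    using Fh_meas[of n] unfolding borel_measurable_iff_ge by blast
  have probN: "P.prob {w \<in> space M. e \<le> Fh N w} \<le> Q.E N / e" if e: "e > 0" for e N
  proof -
    have "P.prob {w \<in> space M. e \<le> Fh N w}
        = (\<integral>w. (\<lambda>h. if e \<le> Q.Fv h then 1 else 0::real) (history iota N w) \<partial>M)"
    proof -
      have "(\<lambda>w. (\<lambda>h. if e \<le> Q.Fv h then 1 else 0::real) (history iota N w))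
          = indicator {w. e \<le> Fh N w}" by (auto simp: Fh_def indicator_def fun_eq_iff)
      moreover have "{w. e \<le> Fh N w} \<inter> space M = {w \<in> space M. e \<le> Fh N w}" by auto
      ultimately show ?thesis by simp
    qed
    also have "\<dots> = (\<Sum>h\<in>Q.Hs N. if e \<le> Q.Fv h then 1 else 0) / real k ^ N"
      using P.hist_int[OF iota_indep iota_unif k_pos, of "\<lambda>h. if e \<le> Q.Fv h then 1 else 0" N] unfolding Q.Hs_def by simp
    also have "\<dots> \<le> (\<Sum>h\<in>Q.Hs N. Q.Fv h / e) / real k ^ N"
    proof (intro divide_right_mono sum_mono)
      fix h assume "h \<in> Q.Hs N"
      then have "0 \<le> Q.Fv h" using Q.Fv_nonneg unfolding Q.Hs_def by auto
      then show "(if e \<le> Q.Fv h then 1 else 0) \<le> Q.Fv h / e" using e by (auto simp: le_divide_eq)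
    qed (use kpos in simp)
    also have "\<dots> = Q.E N / e" unfolding Q.E_def by (simp add: sum_divide_distrib[symmetric])
    finally show ?thesis .
  qed
  have S0: "AE w in M. \<not> (\<forall>n. inverse (real (Suc m)) \<le> Fh n w)" for m
  proof -
    define e where "e = inverse (real (Suc m))"
    have e0: "e > 0" unfolding e_def by simp
    define S where "S = {w \<in> space M. \<forall>n. e \<le> Fh n w}"
    have Sev: "S \<in> P.events" unfolding S_def
      by (intro sets.sets_Collect_countable_All Fh_ev)
    define p where "p = P.prob S"
    have p0: "p \<ge> 0" unfolding p_def by simp
    have pN: "p * e * ((1 - dl) + dl * real N) \<le> C0" if N: "N \<ge> 1" for N
    proof -
      have "p \<le> P.prob {w \<in> space M. e \<le> Fh N w}"
        unfolding p_def S_def by (intro P.finite_measure_mono Fh_ev) auto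
      also have "\<dots> \<le> Q.E N / e" by (rule probN[OF e0])
      finally have "p * e \<le> Q.E N" using e0 by (simp add: le_divide_eq)
      moreover have "Q.E N * ((1 - dl) + dl * real N) \<le> C0"
        unfolding C0eq by (rule seq_bound1[where E=Q.E and D=Q.D and dl=dl and c=c and r=rho, OF dl0 cr r0 Q.D_nn Q.E_mono recE N])
      moreover have "(1 - dl) + dl * real N \<ge> 0" using dl0 by simp
      ultimately show ?thesis by (meson mult_right_mono order_trans)
    qed
    have "p = 0"
    proof (rule ccontr)
      assume "p \<noteq> 0"
      then have pp: "p * e * dl > 0" using p0 e0 dl0 by simp
      define N where "N = nat (ceiling (C0 / (p * e * dl))) + 1"
      have N1: "N \<ge> 1" unfolding N_def by simp
      have "C0 / (p * e * dl) < real N" unfolding N_def by linarith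
      then have "C0 < p * e * dl * real N" using pp by (simp add: divide_less_eq mult.commute)
      moreover have "p * e * dl * real N \<le> p * e * ((1 - dl) + dl * real N)"
      proof -
        have "0 \<le> p * e * (1 - dl)" using dl0 p0 e0 by simp
        thus ?thesis by (simp add: algebra_simps)
      qed
      ultimately show False using pN[OF N1] by linarith
    qed
    then have "AE w in M. w \<notin> S" using P.prob_eq_0[OF Sev] unfolding p_def by blast
    then show ?thesis unfolding S_def e_def by (auto elim!: eventually_mono)
  qed
  have S0all: "AE w in M. \<forall>m. \<not> (\<forall>n. inverse (real (Suc m)) \<le> Fh n w)"
    using AE_all_countable[of "\<lambda>m w. \<not> (\<forall>n. inverse (real (Suc m)) \<le> Fh n w)" M] S0 by blast
  have part1: "AE w in M. (\<lambda>n. f (x (history iota n w))) \<longlonglongrightarrow> f thstar"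
    using P.iota_AE[OF iota_indep iota_unif k_pos] S0all
  proof eventually_elim
    case (elim w)
    have valid: "set (history iota n w) \<subseteq> {..<k}" for n
      using history_set[of iota w k n] elim by auto
    have stepF: "Fh (Suc n) w \<le> Fh n w" for n
      unfolding Fh_def Q.Fv_def history_Suc using Q.mono_step[OF valid] elim by simp
    have dec: "Fh n' w \<le> Fh n w" if "n \<le> n'" for n n'
      using that
    proof (induction n' rule: dec_induct)
      case base then show ?case by simp
    next
      case (step m) then show ?case using stepF[of m] by linarith
    qed
    have nn: "0 \<le> Fh n w" for n unfolding Fh_def using Q.Fv_nonneg[OF valid] .
    show ?case unfolding LIMSEQ_iff
    proof (intro allI impI)
      fix r :: real assume r: "r > 0"
      obtain m where m: "inverse (real (Suc m)) < r" using reals_Archimedean[OF r] by auto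
      obtain n0 where n0: "Fh n0 w < inverse (real (Suc m))" using elim(2)[rule_format, of m] by (auto simp: not_le)
      have "norm (f (x (history iota n w)) - f thstar) < r" if "n \<ge> n0" for n
      proof -
        have "norm (f (x (history iota n w)) - f thstar) = Fh n w"
          using nn[of n] unfolding Fh_def Q.Fv_def by simp
        also have "\<dots> \<le> Fh n0 w" by (rule dec[OF that])
        finally show ?thesis using n0 m by linarith
      qed
      then show "\<exists>no. \<forall>n\<ge>no. norm (f (x (history iota n w)) - f thstar) < r" by blast
    qed
  qed
  show ?thesis using part1 part2 part3 by blast
qed


end
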